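(* Let $M(C,\bar\xi,\pi)$ be a Myller configuration with Darboux frame $(\bar\xi,\bar\mu,\bar v)$ and invariants $G,K,T$ such that $(G(s),T(s))\neq(0,0)$ for all $s$, and let $\bar W_r$ be its unit RD-vector field. Then $C$ is a $W_r$-helix in $M$ if and only if $C$ is a $\bar\mu$-helix in $M$.
   Context: Let $C$ be a smooth curve in $E^3$ parametrized by arclength $s$; primes denote $d/ds$. A Myller configuration $M(C,\bar\xi,\pi)$ consists of a smooth unit vector field $\bar\xi$ along $C$ and a smooth oriented plane field $\pi$ with $\bar\xi\in\pi$; $\bar v$ is the unit normal of $\pi$, $\bar\mu=\bar v\times\bar\xi$, and $\bar\xi'=G\bar\mu+K\bar v$, $\bar\mu'=-G\bar\xi+T\bar v$, $\bar v'=-K\bar\xi-T\bar\mu$. The rectifying-type Darboux vector (RD-vector) is $W_r=T\bar\xi+G\bar v$, $\bar W_r=W_r/\|W_r\|$. $C$ is a $W_r$-helix if $\langle\bar W_r,\bar l_r\rangle$ is constant for some constant unit vector $\bar l_r$; $C$ is a $\bar\mu$-helix if $\langle\bar\mu,\bar d_\mu\rangle$ is constant for some constant unit vector $\bar d_\mu$. *)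

theory Defs
  imports "HOL-Analysis.Analysis"
begin

definition smooth_on_param :: "real set \<Rightarrow> (real \<Rightarrow> 'a::real_normed_vector) \<Rightarrow> bool" where
  "smooth_on_param I f \<longleftrightarrow>
     (\<exists>D :: nat \<Rightarrow> real \<Rightarrow> 'a. D 0 = f \<and>
        (\<forall>n. \<forall>s\<in>I. (D n has_vector_derivative D (Suc n) s) (at s)))"

text \<open>Myller configuration M(C, xi, pi) along a curve c parametrized by arclength on I,
  with Darboux frame (xi, mu, nu) (nu the unit normal of the plane field pi,
  mu = nu x xi) and invariants G, K, T.\<close>
definition myller_config ::
  "real set \<Rightarrow> (real \<Rightarrow> real^3) \<Rightarrow> (real \<Rightarrow> real^3) \<Rightarrow> (real \<Rightarrow> real^3) \<Rightarrow> (real \<Rightarrow> real^3)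
   \<Rightarrow> (real \<Rightarrow> real) \<Rightarrow> (real \<Rightarrow> real) \<Rightarrow> (real \<Rightarrow> real) \<Rightarrow> bool" where
  "myller_config I c xi mu nu G K T \<longleftrightarrow>
     smooth_on_param I c \<and> smooth_on_param I xi \<and> smooth_on_param I nu \<and>
     smooth_on_param I G \<and> smooth_on_param I K \<and> smooth_on_param I T \<and>
     (\<forall>s\<in>I. norm (vector_derivative c (at s)) = 1 \<and> c differentiable (at s)) \<and>
     (\<forall>s\<in>I. norm (xi s) = 1 \<and> norm (nu s) = 1 \<and> xi s \<bullet> nu s = 0 \<and>
             mu s = cross3 (nu s) (xi s)) \<and>
     (\<forall>s\<in>I. (xi has_vector_derivative (G s *\<^sub>R mu s + K s *\<^sub>R nu s)) (at s)) \<and>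
     (\<forall>s\<in>I. (mu has_vector_derivative (- G s *\<^sub>R xi s + T s *\<^sub>R nu s)) (at s)) \<and>
     (\<forall>s\<in>I. (nu has_vector_derivative (- K s *\<^sub>R xi s - T s *\<^sub>R mu s)) (at s))"

definition RD_vector :: "(real \<Rightarrow> real^3) \<Rightarrow> (real \<Rightarrow> real^3) \<Rightarrow> (real \<Rightarrow> real) \<Rightarrow> (real \<Rightarrow> real)
   \<Rightarrow> real \<Rightarrow> real^3" where
  "RD_vector xi nu G T s = T s *\<^sub>R xi s + G s *\<^sub>R nu s"

definition unit_RD_vector :: "(real \<Rightarrow> real^3) \<Rightarrow> (real \<Rightarrow> real^3) \<Rightarrow> (real \<Rightarrow> real) \<Rightarrow> (real \<Rightarrow> real)
   \<Rightarrow> real \<Rightarrow> real^3" where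
  "unit_RD_vector xi nu G T s = (1 / norm (RD_vector xi nu G T s)) *\<^sub>R RD_vector xi nu G T s"

definition field_helix :: "real set \<Rightarrow> (real \<Rightarrow> real^3) \<Rightarrow> bool" where
  "field_helix I X \<longleftrightarrow> (\<exists>l :: real^3. \<exists>k :: real. norm l = 1 \<and> (\<forall>s\<in>I. X s \<bullet> l = k))"

definition Wr_helix :: "real set \<Rightarrow> (real \<Rightarrow> real^3) \<Rightarrow> (real \<Rightarrow> real^3) \<Rightarrow> (real \<Rightarrow> real)
   \<Rightarrow> (real \<Rightarrow> real) \<Rightarrow> bool" where
  "Wr_helix I xi nu G T \<longleftrightarrow> field_helix I (unit_RD_vector xi nu G T)"

definition mu_helix :: "real set \<Rightarrow> (real \<Rightarrow> real^3) \<Rightarrow> bool" where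
  "mu_helix I mu \<longleftrightarrow> field_helix I mu"

end

theory Submission imports Defs begin

lemma cross_triple3: "cross3 (e::real^3) (cross3 n x) = (e \<bullet> x) *\<^sub>R n - (e \<bullet> n) *\<^sub>R x"
  by (simp add: cross3_simps forall_3)

lemma frame_sum:
  fixes e x n :: "real^3"
  assumes "norm x = 1" "norm n = 1" "x \<bullet> n = 0"
  shows "(x \<bullet> e)^2 + (cross3 n x \<bullet> e)^2 + (n \<bullet> e)^2 = (norm e)^2"
proof -
  have "(norm (cross3 n x))^2 = 1" using norm_cross_dot[of n x] assms by (simp add: inner_commute)
  then have nm: "norm (cross3 n x) = 1" using norm_ge_zero[of "cross3 n x"]
    by (smt (verit) power2_eq_1_iff)
  have "(norm (cross3 e (cross3 n x)))\<^sup>2 + (e \<bullet> cross3 n x)\<^sup>2 = (norm e)^2" using norm_cross_dot[of e "cross3 n x"] nm by simp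
  moreover have "(norm (cross3 e (cross3 n x)))\<^sup>2 = (e \<bullet> x)^2 + (e \<bullet> n)^2"
    unfolding cross_triple3 power2_norm_eq_inner using assms
    by (simp add: inner_diff_left inner_diff_right inner_commute power2_eq_square norm_eq_1)
  ultimately show ?thesis by (simp add: inner_commute)
qed

lemma vd_inner:
  assumes "(f has_vector_derivative v) (at s)"
  shows "((\<lambda>t. f t \<bullet> e) has_real_derivative (v \<bullet> e)) (at s)"
proof -
  have "((\<lambda>t. f t \<bullet> e) has_derivative (\<lambda>h. (h *\<^sub>R v) \<bullet> e)) (at s)"
    using has_derivative_inner_left[OF assms[unfolded has_vector_derivative_def]] .
  moreover have "(\<lambda>h. (h *\<^sub>R v) \<bullet> e) = (*) (v \<bullet> e)" by (auto simp: fun_eq_iff)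
  ultimately show ?thesis unfolding has_field_derivative_def by simp
qed

lemma sq_const:
  fixes f :: "real \<Rightarrow> real"
  assumes "is_interval I" "continuous_on I f" "\<forall>s\<in>I. (f s)^2 = c" "s0 \<in> I" "s \<in> I"
  shows "f s = f s0"
proof (rule ccontr)
  assume ne: "f s \<noteq> f s0"
  have "(f s)^2 = (f s0)^2" using assms by simp
  then have neg: "f s = - f s0" using ne by (metis power2_eq_iff)
  then have nz: "f s0 \<noteq> 0" using ne by auto
  have "connected (f ` I)" using assms connected_continuous_image is_interval_connected by blast
  then have ii: "is_interval (f ` I)" using is_interval_connected_1 by blast
  have "0 \<in> f ` I"
  proof (cases "f s0 > 0")
    case True
    then show ?thesis using ii assms(4,5) neg unfolding is_interval_1
      by (metis image_eqI less_eq_real_def neg_less_0_iff_less)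
  next
    case False
    then show ?thesis using ii assms(4,5) neg nz unfolding is_interval_1
      by (metis image_eqI linorder_not_less neg_0_le_iff_le)
  qed
  then obtain t where "t \<in> I" "f t = 0" by auto
  then have "c = 0" using assms by force
  then show False using assms nz by simp
qed



lemma alg_aux:
  fixes R W :: real assumes "R \<noteq> 0"
  shows "a1 * R - a * (c / R) = (a1 * R^2 - a * c) / R" and "(W / R) / (R * R) * R^3 = W"
  and "(k * b / R) * R^3 = k * b * R^2"
  using assms by (simp_all add: field_simps power2_eq_square power3_eq_cube)

lemma alg1:
  fixes a b a1 b1 R y z Kk k :: real
  assumes "R > 0" "R^2 = a^2 + b^2" "z = k * b / R"
    "b * y + Kk * z = k * ((a1 * R - a * ((a * a1 + b * b1) / R)) / (R * R))"
  shows "b * (y * R^3 + k * (a * b1 - a1 * b + Kk * (a^2 + b^2))) = 0"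
proof -
  have R: "R \<noteq> 0" using assms by simp
  have "(b * y + Kk * z) * R^3 = k * ((a1 * R^2 - a * (a * a1 + b * b1)) / R / (R * R) * R^3)"
    unfolding assms(4) alg_aux(1)[OF R] by simp
  also have "\<dots> = k * (a1 * R^2 - a * (a * a1 + b * b1))" unfolding alg_aux(2)[OF R] ..
  finally have "b * y * R^3 + Kk * (z * R^3) = k * (a1 * R^2 - a * (a * a1 + b * b1))"
    by (simp add: algebra_simps)
  then have "b * y * R^3 + Kk * (k * b * R^2) = k * (a1 * R^2 - a * (a * a1 + b * b1))"
    unfolding assms(3) alg_aux(3)[OF R] .
  then show ?thesis unfolding assms(2) by (simp add: algebra_simps power2_eq_square)
qed

lemma alg2:
  fixes a b a1 b1 R y x Kk k :: real
  assumes "R > 0" "R^2 = a^2 + b^2" "x = k * a / R"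
    "- Kk * x - a * y = k * ((b1 * R - b * ((a * a1 + b * b1) / R)) / (R * R))"
  shows "a * (y * R^3 + k * (a * b1 - a1 * b + Kk * (a^2 + b^2))) = 0"
proof -
  have R: "R \<noteq> 0" using assms by simp
  have "(- Kk * x - a * y) * R^3 = k * ((b1 * R^2 - b * (a * a1 + b * b1)) / R / (R * R) * R^3)"
    unfolding assms(4) alg_aux(1)[OF R] by simp
  also have "\<dots> = k * (b1 * R^2 - b * (a * a1 + b * b1))" unfolding alg_aux(2)[OF R] ..
  finally have "- Kk * (x * R^3) - a * y * R^3 = k * (b1 * R^2 - b * (a * a1 + b * b1))"
    by (simp add: algebra_simps)
  then have "- Kk * (k * a * R^2) - a * y * R^3 = k * (b1 * R^2 - b * (a * a1 + b * b1))"
    unfolding assms(3) alg_aux(3)[OF R] .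
  then show ?thesis unfolding assms(2) by (simp add: algebra_simps power2_eq_square)
qed

locale myl =
  fixes I :: "real set" and xi mu nu :: "real \<Rightarrow> real^3" and G K T G1 T1 :: "real \<Rightarrow> real"
  assumes openI: "open I" and intI: "is_interval I"
    and xi_der: "\<forall>s\<in>I. (xi has_vector_derivative (G s *\<^sub>R mu s + K s *\<^sub>R nu s)) (at s)"
    and mu_der: "\<forall>s\<in>I. (mu has_vector_derivative (- G s *\<^sub>R xi s + T s *\<^sub>R nu s)) (at s)"
    and nu_der: "\<forall>s\<in>I. (nu has_vector_derivative (- K s *\<^sub>R xi s - T s *\<^sub>R mu s)) (at s)"
    and frame: "\<forall>s\<in>I. norm (xi s) = 1 \<and> norm (nu s) = 1 \<and> xi s \<bullet> nu s = 0 \<and>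
             mu s = cross3 (nu s) (xi s)"
    and G_der: "\<forall>s\<in>I. (G has_real_derivative G1 s) (at s)"
    and T_der: "\<forall>s\<in>I. (T has_real_derivative T1 s) (at s)"
    and K_cont: "continuous_on I K" and G1_cont: "continuous_on I G1" and T1_cont: "continuous_on I T1"
    and nondeg: "\<forall>s\<in>I. (G s, T s) \<noteq> (0, 0)"
begin

definition "r s = sqrt ((T s)^2 + (G s)^2)"
definition "X e s = xi s \<bullet> e"
definition "Y e s = mu s \<bullet> e"
definition "Z e s = nu s \<bullet> e"
definition "P e s = T s * X e s + G s * Z e s"
definition "U e s = - G s * X e s + T s * Z e s"
definition "beta s = T s * G1 s - T1 s * G s + K s * ((T s)^2 + (G s)^2)"

lemma r_pos: "s \<in> I \<Longrightarrow> r s > 0"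
  using nondeg unfolding r_def by (auto simp: sum_power2_gt_zero_iff)

lemma r_sq: "(r s)^2 = (T s)^2 + (G s)^2"
  unfolding r_def by simp

lemma XYZ: "s \<in> I \<Longrightarrow> (X e s)^2 + (Y e s)^2 + (Z e s)^2 = (norm e)^2"
  using frame frame_sum unfolding X_def Y_def Z_def by metis

lemma X_der: "s \<in> I \<Longrightarrow> (X e has_real_derivative G s * Y e s + K s * Z e s) (at s)"
  using vd_inner[OF xi_der[rule_format], of s e] unfolding X_def Y_def Z_def
  by (simp add: inner_add_left)

lemma Y_der: "s \<in> I \<Longrightarrow> (Y e has_real_derivative U e s) (at s)"
  using vd_inner[OF mu_der[rule_format], of s e] unfolding X_def Y_def Z_def U_def
  by (simp add: inner_add_left inner_diff_left)

lemma Z_der: "s \<in> I \<Longrightarrow> (Z e has_real_derivative - K s * X e s - T s * Y e s) (at s)"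
  using vd_inner[OF nu_der[rule_format], of s e] unfolding X_def Y_def Z_def
  by (simp add: inner_diff_left)

lemma r_der: "s \<in> I \<Longrightarrow> (r has_real_derivative (T s * T1 s + G s * G1 s) / r s) (at s)"
proof -
  assume s: "s \<in> I"
  have pos: "(T s)^2 + (G s)^2 > 0" using r_pos[OF s] unfolding r_def by simp
  have d: "((\<lambda>t. sqrt ((T t)^2 + (G t)^2)) has_real_derivative
     inverse (sqrt ((T s)^2 + (G s)^2)) / 2 * (2 * T s * T1 s + 2 * G s * G1 s)) (at s)"
    by (rule DERIV_chain2[where g="\<lambda>t. (T t)^2 + (G t)^2", OF DERIV_real_sqrt[OF pos]])
       (auto intro!: derivative_eq_intros G_der[rule_format, OF s] T_der[rule_format, OF s])
  have eq: "inverse (sqrt ((T s)^2 + (G s)^2)) / 2 * (2 * T s * T1 s + 2 * G s * G1 s)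
     = (T s * T1 s + G s * G1 s) / sqrt ((T s)^2 + (G s)^2)"
  proof -
    have g: "inverse q / 2 * (2 * a) = a / q" for q a :: real by (cases "q = 0") (simp_all add: field_simps)
    have e2: "2 * T s * T1 s + 2 * G s * G1 s = 2 * (T s * T1 s + G s * G1 s)" by (simp add: distrib_left)
    show ?thesis unfolding e2 by (rule g)
  qed
  have rfun: "r = (\<lambda>t. sqrt ((T t)^2 + (G t)^2))" by (simp add: fun_eq_iff r_def)
  show ?thesis unfolding rfun using DERIV_cong[OF d eq] by simp
qed

lemma P_der: "s \<in> I \<Longrightarrow> (P e has_real_derivative T1 s * X e s + G1 s * Z e s + K s * U e s) (at s)"
proof -
  assume s: "s \<in> I"
  have "(P e has_real_derivative T1 s * X e s + T s * (G s * Y e s + K s * Z e s)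
      + (G1 s * Z e s + G s * (- K s * X e s - T s * Y e s))) (at s)"
    unfolding P_def[abs_def]
    by (auto intro!: derivative_eq_intros G_der[rule_format, OF s] T_der[rule_format, OF s]
         X_der[OF s] Z_der[OF s])
  then show ?thesis unfolding U_def by (simp add: algebra_simps)
qed

lemma f_der: "s \<in> I \<Longrightarrow> ((\<lambda>t. P e t / r t) has_real_derivative U e s * beta s / (r s)^3) (at s)"
proof -
  assume s: "s \<in> I"
  have rp: "r s > 0" using r_pos[OF s] .
  have "((\<lambda>t. P e t / r t) has_real_derivative
     ((T1 s * X e s + G1 s * Z e s + K s * U e s) * r s - P e s * ((T s * T1 s + G s * G1 s) / r s)) / (r s * r s)) (at s)"
    by (rule DERIV_divide[OF P_der[OF s] r_der[OF s]]) (use rp in simp)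
  moreover have "((T1 s * X e s + G1 s * Z e s + K s * U e s) * r s - P e s * ((T s * T1 s + G s * G1 s) / r s)) / (r s * r s)
     = U e s * beta s / (r s)^3"
  proof -
    have rr: "r s * r s = (T s)^2 + (G s)^2" using r_sq[of s] by (simp add: power2_eq_square)
    have "((T1 s * X e s + G1 s * Z e s + K s * U e s) * r s - P e s * ((T s * T1 s + G s * G1 s) / r s)) / (r s * r s)
       = ((T1 s * X e s + G1 s * Z e s + K s * U e s) * (r s * r s) - P e s * (T s * T1 s + G s * G1 s)) / (r s)^3"
      using rp by (simp add: field_simps power3_eq_cube)
    also have "\<dots> = U e s * beta s / (r s)^3"
      unfolding rr P_def U_def beta_def by (simp add: algebra_simps power2_eq_square)
    finally show ?thesis .
  qed
  ultimately show ?thesis by simp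
qed

lemma unit_dot: "s \<in> I \<Longrightarrow> unit_RD_vector xi nu G T s \<bullet> e = P e s / r s"
proof -
  assume s: "s \<in> I"
  have "(norm (RD_vector xi nu G T s))^2 = (T s)^2 + (G s)^2"
    using frame[rule_format, OF s] unfolding RD_vector_def power2_norm_eq_inner
    by (simp add: inner_add_left inner_add_right inner_commute power2_eq_square norm_eq_1)
  then have "norm (RD_vector xi nu G T s) = r s" unfolding r_def by (simp add: real_sqrt_unique)
  then show ?thesis unfolding unit_RD_vector_def RD_vector_def P_def X_def Z_def
    by (simp add: inner_add_left divide_simps)
qed


lemma RD_norm: "s \<in> I \<Longrightarrow> norm (RD_vector xi nu G T s) = r s"
proof -
  assume s: "s \<in> I"
  have "(norm (RD_vector xi nu G T s))^2 = (T s)^2 + (G s)^2"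
    using frame[rule_format, OF s] unfolding RD_vector_def power2_norm_eq_inner
    by (simp add: inner_add_left inner_add_right inner_commute power2_eq_square norm_eq_1)
  then show "norm (RD_vector xi nu G T s) = r s" unfolding r_def by (simp add: real_sqrt_unique)
qed

lemma locconst:
  fixes f :: "real \<Rightarrow> real"
  assumes "s \<in> I" "(f has_real_derivative D) (at s)" "\<forall>t\<in>I. f t = k"
  shows "D = 0"
proof -
  have "((\<lambda>_. k) has_real_derivative D) (at s)"
    using has_field_derivative_transform_within_open[OF assms(2) openI assms(1)] assms(3) by simp
  then show ?thesis using DERIV_const DERIV_unique by blast
qed

lemma deriv_zero_const:
  fixes f :: "real \<Rightarrow> real"
  assumes "\<forall>s\<in>I. (f has_real_derivative 0) (at s)" "s0 \<in> I" "s \<in> I"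
  shows "f s = f s0"
proof -
  have cv: "convex I" using intI by (rule is_interval_convex)
  have "\<exists>c. \<forall>x\<in>I. f x = c"
    by (rule has_field_derivative_zero_constant[OF cv]) (use assms(1) has_field_derivative_at_within in blast)
  then show ?thesis using assms by metis
qed

lemma cont_of_der:
  fixes f :: "real \<Rightarrow> real"
  assumes "\<And>s. s \<in> I \<Longrightarrow> (f has_real_derivative f' s) (at s)"
  shows "continuous_on I f"
proof (rule continuous_at_imp_continuous_on, rule ballI)
  fix s assume "s \<in> I"
  then show "isCont f s" using assms DERIV_isCont by blast
qed

lemma T_cont: "continuous_on I T" by (rule cont_of_der[of T T1]) (use T_der in simp)
lemma G_cont: "continuous_on I G" by (rule cont_of_der[of G G1]) (use G_der in simp)
lemma r_cont: "continuous_on I r" by (rule cont_of_der[OF r_der])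
lemma beta_cont: "continuous_on I beta"
  unfolding beta_def[abs_def]
  by (intro continuous_intros T_cont G_cont K_cont G1_cont T1_cont)

lemma sub_I: "x \<in> I \<Longrightarrow> y \<in> I \<Longrightarrow> {x..y} \<subseteq> I"
proof
  fix z assume "x \<in> I" "y \<in> I" "z \<in> {x..y}"
  then show "z \<in> I" using intI[unfolded is_interval_1] by (meson atLeastAtMost_iff)
qed

lemma Ubeta:
  assumes "\<forall>s\<in>I. P l s / r s = k" "s \<in> I"
  shows "U l s * beta s = 0"
proof -
  have "U l s * beta s / (r s)^3 = 0" by (rule locconst[OF assms(2) f_der[OF assms(2)] assms(1)])
  then show ?thesis using r_pos[OF assms(2)] by simp
qed


lemma core:
  assumes l: "norm l = 1" and hk: "\<forall>s\<in>I. P l s / r s = k"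
    and pq: "p < q" "{p..q} \<subseteq> I" and nz: "\<forall>t\<in>{p<..<q}. beta t \<noteq> 0"
    and ends: "beta p = 0 \<or> beta q = 0"
  shows False
proof -
  define Q where "Q t = k^2 * (beta t)^2 - (1 - k^2) * (r t)^6" for t
  have Qz: "Q t = 0" if t: "t \<in> {p<..<q}" for t
  proof -
    have tI: "t \<in> I" using t pq by auto
    have Ut: "U l t = 0" if tt: "t \<in> {p<..<q}" for t
    proof -
      have "t \<in> I" using tt pq by auto
      then show ?thesis using Ubeta[OF hk, of t] nz tt by simp
    qed
    have rp: "r t > 0" using r_pos[OF tI] .
    have Xe: "X l x = k * (T x / r x)" and Ze: "Z l x = k * (G x / r x)" if x: "x \<in> {p<..<q}" for x
    proof -
      have xI: "x \<in> I" using x pq by auto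
      have rx: "r x > 0" using r_pos[OF xI] .
      have "P l x / r x = k" using hk xI by blast
      then have Px: "P l x = k * r x" using rx by (simp add: divide_eq_eq)
      have Ux: "U l x = 0" using Ut x .
      have "X l x * (r x)^2 = T x * P l x - G x * U l x"
        unfolding r_sq P_def U_def by (simp add: algebra_simps power2_eq_square)
      then have "X l x * (r x)^2 = T x * k * r x" using Px Ux by simp
      then show "X l x = k * (T x / r x)" using rx by (simp add: field_simps power2_eq_square)
      have "Z l x * (r x)^2 = G x * P l x + T x * U l x"
        unfolding r_sq P_def U_def by (simp add: algebra_simps power2_eq_square)
      then have "Z l x * (r x)^2 = G x * k * r x" using Px Ux by simp
      then show "Z l x = k * (G x / r x)" using rx by (simp add: field_simps power2_eq_square)
    qed
    have dT: "((\<lambda>s. k * (T s / r s)) has_real_derivative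
        k * ((T1 t * r t - T t * ((T t * T1 t + G t * G1 t) / r t)) / (r t * r t))) (at t)"
      by (rule DERIV_cmult, rule DERIV_divide[OF T_der[rule_format, OF tI] r_der[OF tI]])
         (use rp in simp)
    have dG: "((\<lambda>s. k * (G s / r s)) has_real_derivative
        k * ((G1 t * r t - G t * ((T t * T1 t + G t * G1 t) / r t)) / (r t * r t))) (at t)"
      by (rule DERIV_cmult, rule DERIV_divide[OF G_der[rule_format, OF tI] r_der[OF tI]])
         (use rp in simp)
    have dX: "(X l has_real_derivative
        k * ((T1 t * r t - T t * ((T t * T1 t + G t * G1 t) / r t)) / (r t * r t))) (at t)"
      by (rule has_field_derivative_transform_within_open[OF dT, of "{p<..<q}"])
         (use t Xe in auto)
    have dZ: "(Z l has_real_derivative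
        k * ((G1 t * r t - G t * ((T t * T1 t + G t * G1 t) / r t)) / (r t * r t))) (at t)"
      by (rule has_field_derivative_transform_within_open[OF dG, of "{p<..<q}"])
         (use t Ze in auto)
    have e1: "G t * Y l t + K t * Z l t
        = k * ((T1 t * r t - T t * ((T t * T1 t + G t * G1 t) / r t)) / (r t * r t))"
      using DERIV_unique[OF X_der[OF tI] dX] .
    have e2: "- K t * X l t - T t * Y l t
        = k * ((G1 t * r t - G t * ((T t * T1 t + G t * G1 t) / r t)) / (r t * r t))"
      using DERIV_unique[OF Z_der[OF tI] dZ] .
    have Zt: "Z l t = k * G t / r t" using Ze[OF t] by simp
    have Xt: "X l t = k * T t / r t" using Xe[OF t] by simp
    have h1: "G t * (Y l t * (r t)^3 + k * beta t) = 0"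
      using alg1[OF rp r_sq Zt e1] unfolding beta_def .
    have h2: "T t * (Y l t * (r t)^3 + k * beta t) = 0"
      using alg2[OF rp r_sq Xt e2] unfolding beta_def .
    have h: "Y l t * (r t)^3 + k * beta t = 0" using h1 h2 nondeg tI by auto
    have "(X l t)^2 + (Y l t)^2 + (Z l t)^2 = 1" using XYZ[OF tI, of l] l by simp
    then have "k^2 * (((T t)^2 + (G t)^2) / (r t)^2) + (Y l t)^2 = 1"
      unfolding Xt Zt using rp by (simp add: field_simps power2_eq_square)
    then have ky: "k^2 + (Y l t)^2 = 1" unfolding r_sq[symmetric] using rp by simp
    have kb: "k * beta t = - (Y l t * (r t)^3)" using h by simp
    have "k^2 * (beta t)^2 = (k * beta t)^2" by (simp add: power_mult_distrib)
    also have "\<dots> = (Y l t * (r t)^3)^2" unfolding kb by (rule power2_minus)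
    also have "\<dots> = (Y l t)^2 * (r t)^6" by (simp add: power_mult_distrib flip: power_mult)
    finally have kb2: "k^2 * (beta t)^2 = (Y l t)^2 * (r t)^6" .
    have "1 - k^2 = (Y l t)^2" using ky by simp
    then show "Q t = 0" unfolding Q_def kb2 by simp
  qed
  have Qc: "continuous_on {p..q} Q" unfolding Q_def[abs_def]
    by (intro continuous_intros continuous_on_subset[OF beta_cont pq(2)] continuous_on_subset[OF r_cont pq(2)])
  have cl: "closed {x \<in> {p..q}. Q x = 0}"
    by (rule continuous_closed_preimage_constant[OF Qc closed_atLeastAtMost])
  have "{p<..<q} \<subseteq> {x \<in> {p..q}. Q x = 0}" using Qz by auto
  then have "closure {p<..<q} \<subseteq> {x \<in> {p..q}. Q x = 0}" using cl closure_minimal by blast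
  then have sub: "{p..q} \<subseteq> {x \<in> {p..q}. Q x = 0}" using pq(1) closure_greaterThanLessThan[of p q] by simp
  have "p \<in> {p..q}" "q \<in> {p..q}" using pq(1) by auto
  then have QQ: "Q p = 0" "Q q = 0" using sub by blast+
  have "p \<in> I" "q \<in> I" using pq by auto
  obtain e where e: "e \<in> I" "beta e = 0" "Q e = 0" using ends QQ \<open>p \<in> I\<close> \<open>q \<in> I\<close> by blast
  have "(1 - k^2) * (r e)^6 = 0" using e unfolding Q_def by simp
  then have k1: "k^2 = 1" using r_pos[OF e(1)] by simp
  define t where "t = (p + q) / 2"
  have t: "t \<in> {p<..<q}" using pq(1) unfolding t_def by auto
  have "k^2 * (beta t)^2 = 0" using Qz[OF t] k1 unfolding Q_def by simp
  then have "beta t = 0" using k1 by simp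
  then show False using nz t by blast
qed

lemma dirA:
  assumes "I \<noteq> {}" "mu_helix I mu"
  shows "Wr_helix I xi nu G T"
proof -
  obtain d m where d: "norm d = 1" "\<forall>s\<in>I. mu s \<bullet> d = m"
    using assms(2) unfolding mu_helix_def field_helix_def by blast
  obtain s0 where s0: "s0 \<in> I" using assms(1) by blast
  have Ym: "\<forall>s\<in>I. Y d s = m" using d unfolding Y_def by simp
  have U0: "U d s = 0" if "s \<in> I" for s using locconst[OF that Y_der[OF that] Ym] .
  define f where "f s = P d s / r s" for s
  have fc: "continuous_on I f" unfolding f_def by (rule cont_of_der[OF f_der])
  have fsq: "\<forall>s\<in>I. (f s)^2 = 1 - m^2"
  proof
    fix s assume s: "s \<in> I"
    have "(P d s)^2 + (U d s)^2 = (r s)^2 * ((X d s)^2 + (Z d s)^2)"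
      unfolding r_sq P_def U_def by (simp add: algebra_simps power2_eq_square)
    moreover have "(X d s)^2 + (Z d s)^2 = 1 - m^2" using XYZ[OF s, of d] d Ym s by simp
    ultimately have "(P d s)^2 = (r s)^2 * (1 - m^2)" using U0[OF s] by simp
    then show "(f s)^2 = 1 - m^2" unfolding f_def using r_pos[OF s]
      by (simp add: power_divide)
  qed
  have "\<forall>s\<in>I. unit_RD_vector xi nu G T s \<bullet> d = f s0"
    using sq_const[OF intI fc fsq s0] unit_dot unfolding f_def by simp
  then show ?thesis unfolding Wr_helix_def field_helix_def using d(1) by blast
qed

lemma dirB:
  assumes "I \<noteq> {}" "Wr_helix I xi nu G T"
  shows "mu_helix I mu"
proof -
  obtain l k where l: "norm l = 1" "\<forall>s\<in>I. unit_RD_vector xi nu G T s \<bullet> l = k"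
    using assms(2) unfolding Wr_helix_def field_helix_def by blast
  have hk: "\<forall>s\<in>I. P l s / r s = k" using l unit_dot by simp
  obtain s0 where s0: "s0 \<in> I" using assms(1) by blast
  show ?thesis
  proof (cases "\<forall>s\<in>I. beta s = 0")
    case True
    define w0 where "w0 = unit_RD_vector xi nu G T s0"
    have un: "norm (unit_RD_vector xi nu G T s) = 1" if "s \<in> I" for s
      using RD_norm[OF that] r_pos[OF that] unfolding unit_RD_vector_def by simp
    have d0: "\<forall>s\<in>I. ((\<lambda>t. P w0 t / r t) has_real_derivative 0) (at s)"
      using f_der True by fastforce
    have c1: "unit_RD_vector xi nu G T s \<bullet> w0 = 1" if s: "s \<in> I" for s
    proof -
      have "P w0 s / r s = P w0 s0 / r s0" using deriv_zero_const[OF d0 s0 s] by simp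
      then have "unit_RD_vector xi nu G T s \<bullet> w0 = w0 \<bullet> w0" using unit_dot s s0 unfolding w0_def by simp
      then show ?thesis using un[OF s0] unfolding w0_def by (simp add: norm_eq_1)
    qed
    have eqw: "unit_RD_vector xi nu G T s = w0" if s: "s \<in> I" for s
    proof -
      have "(norm (unit_RD_vector xi nu G T s - w0))^2 = 0"
        unfolding power2_norm_eq_inner using c1[OF s] un[OF s] un[OF s0]
        by (simp add: inner_diff_left inner_diff_right inner_commute norm_eq_1 w0_def)
      then show ?thesis by simp
    qed
    have "\<forall>s\<in>I. mu s \<bullet> w0 = 0"
    proof
      fix s assume s: "s \<in> I"
      have "mu s \<bullet> w0 = mu s \<bullet> unit_RD_vector xi nu G T s" using eqw[OF s] by simp
      also have "\<dots> = 0" using frame[rule_format, OF s]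
        unfolding unit_RD_vector_def RD_vector_def
        by (simp add: inner_add_right dot_cross_self inner_commute)
      finally show "mu s \<bullet> w0 = 0" .
    qed
    then show ?thesis unfolding mu_helix_def field_helix_def using un[OF s0] unfolding w0_def by blast
  next
    case False
    then obtain s1 where s1: "s1 \<in> I" "beta s1 \<noteq> 0" by blast
    have allnz: "beta b \<noteq> 0" if b: "b \<in> I" for b
    proof
      assume bz: "beta b = 0"
      then have "s1 \<noteq> b" using s1 by auto
      then consider "s1 < b" | "b < s1" by linarith
      then show False
      proof cases
        case 1
        define Zs where "Zs = {t \<in> {s1..b}. beta t = 0}"
        have cl: "closed Zs" unfolding Zs_def
          by (rule continuous_closed_preimage_constant[OF continuous_on_subset[OF beta_cont sub_I[OF s1(1) b]] closed_atLeastAtMost])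
        have bZ: "b \<in> Zs" using 1 bz unfolding Zs_def by auto
        have bdd: "bdd_below Zs" unfolding Zs_def by (rule bdd_belowI[of _ s1]) auto
        define b' where "b' = Inf Zs"
        have b'Z: "b' \<in> Zs" unfolding b'_def using closed_contains_Inf[OF _ bdd cl] bZ by blast
        then have "s1 \<le> b'" "b' \<le> b" "beta b' = 0" unfolding Zs_def by auto
        then have lt: "s1 < b'" using s1 by (cases "s1 = b'") auto
        have nz: "\<forall>t\<in>{s1<..<b'}. beta t \<noteq> 0"
        proof (intro ballI notI)
          fix t assume t: "t \<in> {s1<..<b'}" and "beta t = 0"
          then have "t \<in> Zs" unfolding Zs_def using \<open>b' \<le> b\<close> by auto
          then have "b' \<le> t" unfolding b'_def using bdd by (rule cInf_lower)
          then show False using t by auto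
        qed
        show False
          by (rule core[OF l(1) hk lt sub_I[OF s1(1)] nz])
             (use b'Z sub_I[OF s1(1) b] \<open>b' \<le> b\<close> \<open>beta b' = 0\<close> \<open>s1 \<le> b'\<close> in auto)
      next
        case 2
        define Zs where "Zs = {t \<in> {b..s1}. beta t = 0}"
        have cl: "closed Zs" unfolding Zs_def
          by (rule continuous_closed_preimage_constant[OF continuous_on_subset[OF beta_cont sub_I[OF b s1(1)]] closed_atLeastAtMost])
        have bZ: "b \<in> Zs" using 2 bz unfolding Zs_def by auto
        have bdd: "bdd_above Zs" unfolding Zs_def by (rule bdd_aboveI[of _ s1]) auto
        define b' where "b' = Sup Zs"
        have b'Z: "b' \<in> Zs" unfolding b'_def using closed_contains_Sup[OF _ bdd cl] bZ by blast
        then have "b \<le> b'" "b' \<le> s1" "beta b' = 0" unfolding Zs_def by auto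
        then have lt: "b' < s1" using s1 by (cases "s1 = b'") auto
        have nz: "\<forall>t\<in>{b'<..<s1}. beta t \<noteq> 0"
        proof (intro ballI notI)
          fix t assume t: "t \<in> {b'<..<s1}" and "beta t = 0"
          then have "t \<in> Zs" unfolding Zs_def using \<open>b \<le> b'\<close> by auto
          then have "t \<le> b'" unfolding b'_def using bdd by (rule cSup_upper)
          then show False using t by auto
        qed
        have bI: "b' \<in> I" using sub_I[OF b s1(1)] \<open>b \<le> b'\<close> \<open>b' \<le> s1\<close> by auto
        show False
          by (rule core[OF l(1) hk lt sub_I[OF bI s1(1)] nz]) (use \<open>beta b' = 0\<close> in auto)
      qed
    qed
    have U0: "U l s = 0" if "s \<in> I" for s using Ubeta[OF hk that] allnz[OF that] by simp
    have "\<forall>s\<in>I. (Y l has_real_derivative 0) (at s)"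
    proof
      fix s assume s: "s \<in> I"
      show "(Y l has_real_derivative 0) (at s)" using Y_der[OF s, of l] U0[OF s] by simp
    qed
    then have "\<forall>s\<in>I. mu s \<bullet> l = Y l s0" using deriv_zero_const[OF _ s0] unfolding Y_def by blast
    then show ?thesis unfolding mu_helix_def field_helix_def using l(1) by blast
  qed
qed

end



lemma smooth_der:
  fixes f :: "real \<Rightarrow> real"
  assumes "smooth_on_param I f"
  shows "\<exists>f'. (\<forall>s\<in>I. (f has_real_derivative f' s) (at s)) \<and> continuous_on I f'"
proof -
  obtain D :: "nat \<Rightarrow> real \<Rightarrow> real" where D: "D 0 = f" "\<forall>n. \<forall>s\<in>I. (D n has_vector_derivative D (Suc n) s) (at s)"
    using assms unfolding smooth_on_param_def by blast
  have d: "\<forall>s\<in>I. (D n has_real_derivative D (Suc n) s) (at s)" for n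
    using D(2) has_real_derivative_iff_has_vector_derivative by blast
  have "continuous_on I (D 1)"
  proof (rule continuous_at_imp_continuous_on, rule ballI)
    fix s assume "s \<in> I"
    then show "isCont (D 1) s" using d[of 1] DERIV_isCont by blast
  qed
  moreover have "\<forall>s\<in>I. (f has_real_derivative D 1 s) (at s)" using d[of 0] D(1) by simp
  ultimately show ?thesis by blast
qed

lemma smooth_cont:
  fixes f :: "real \<Rightarrow> real"
  assumes "smooth_on_param I f"
  shows "continuous_on I f"
proof -
  obtain f' where "\<forall>s\<in>I. (f has_real_derivative f' s) (at s)" using smooth_der[OF assms] by blast
  then show ?thesis
    by (intro continuous_at_imp_continuous_on ballI) (use DERIV_isCont in blast)
qed

theorem theorem21:
  fixes I :: "real set" and c xi mu nu :: "real \<Rightarrow> real^3" and G K T :: "real \<Rightarrow> real"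
  assumes "open I" and "is_interval I" and "I \<noteq> {}"
    and "myller_config I c xi mu nu G K T"
    and "\<forall>s\<in>I. (G s, T s) \<noteq> (0, 0)"
  shows "Wr_helix I xi nu G T \<longleftrightarrow> mu_helix I mu"
proof -
  have sm: "smooth_on_param I G" "smooth_on_param I K" "smooth_on_param I T"
    and fr: "\<forall>s\<in>I. norm (xi s) = 1 \<and> norm (nu s) = 1 \<and> xi s \<bullet> nu s = 0 \<and>
             mu s = cross3 (nu s) (xi s)"
    and xd: "\<forall>s\<in>I. (xi has_vector_derivative (G s *\<^sub>R mu s + K s *\<^sub>R nu s)) (at s)"
    and md: "\<forall>s\<in>I. (mu has_vector_derivative (- G s *\<^sub>R xi s + T s *\<^sub>R nu s)) (at s)"
    and nd: "\<forall>s\<in>I. (nu has_vector_derivative (- K s *\<^sub>R xi s - T s *\<^sub>R mu s)) (at s)"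
    using assms(4) unfolding myller_config_def by blast+
  obtain G1 where G1: "\<forall>s\<in>I. (G has_real_derivative G1 s) (at s)" "continuous_on I G1"
    using smooth_der[OF sm(1)] by blast
  obtain T1 where T1: "\<forall>s\<in>I. (T has_real_derivative T1 s) (at s)" "continuous_on I T1"
    using smooth_der[OF sm(3)] by blast
  have Kc: "continuous_on I K" using smooth_cont[OF sm(2)] .
  interpret m: myl I xi mu nu G K T G1 T1
    by (rule myl.intro[OF assms(1) assms(2) xd md nd fr G1(1) T1(1) Kc G1(2) T1(2) assms(5)])
  show ?thesis using m.dirA m.dirB assms(3) by blast
qed

end
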